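(* Let $\sigma$ be a $\Phi$-nondegenerate super filling of $\mathrm{dg}(\lambda)$ (order $<_2$) with distinguished cell $u$. Then $\Phi_u(\sigma)$ is again $\Phi$-nondegenerate with the same distinguished cell $u$ (so $\sigma\mapsto\Phi_u(\sigma)$ is an involution on $\Phi$-nondegenerate super fillings), and \[ q^{p(\Phi_u(\sigma))+\mathrm{maj}(\Phi_u(\sigma))}t^{\mathrm{quinv}(\Phi_u(\sigma))}=q^{p(\sigma)+\mathrm{maj}(\sigma)}t^{\mathrm{quinv}(\sigma)}. \]
   Context: Let $\lambda=(\lambda_1\ge\dots\ge\lambda_k>0)$ be a partition; $\mathrm{dg}(\lambda)=\{(r,i):1\le i\le k,1\le r\le\lambda_i\}$, $(r,i)$ being row $r$ from the bottom and column $i$ from the left (columns bottom-justified of heights $\lambda_i$); $\mathrm{leg}((r,i))=\lambda_i-r$. $\mathcal A=\{1,\bar1,2,\bar2,\dots\}$ consists of positive letters $i$ and negative letters $\bar i$, $|i|=|\bar i|=i$, totally ordered by $<_2$: $0<1<2<3<\cdots<\bar3<\bar2<\bar1$. $I(a,b)=1$ if $a>b$ or $a=b$ is negative, and $I(a,b)=0$ if $a<b$ or $a=b$ is positive. A super filling is $\sigma:\mathrm{dg}(\lambda)\to\mathcal A$; a cell $u=(r,i)$, $r>1$, is a descent if $I(\sigma(u),\sigma((r-1,i)))=1$, and $\mathrm{maj}(\sigma)=\sum_{\text{descents }u}(\mathrm{leg}(u)+1)$. A triple is either three cells $(r+1,i),(r,i),(r,j)$ with $i<j$, or (degenerate) two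 cells $(r,i),(r,j)$ with $i<j$ and $\lambda_i=r$; with $a=\sigma((r+1,i))$ ($a=0$ if degenerate), $b=\sigma((r,i))$, $c=\sigma((r,j))$, it is a quinv triple iff exactly one of $I(a,b)=1$, $I(c,b)=0$, $I(a,c)=0$ holds; $\mathrm{quinv}(\sigma)$ is their number. $p(\sigma)$ is the number of positive entries. The reading order goes through rows top to bottom, each row right to left. $\Phi_u(\sigma)$ changes the sign of the entry in cell $u$. The distinguished label of $\sigma$ is the smallest positive integer $a$ such that some cell $(r,j)$ has $|\sigma((r,j))|=a$ and $r>a$; the distinguished cell is the first cell in reading order whose entry has absolute value $a$; $\sigma$ is $\Phi$-nondegenerate if $a$ exists and the distinguished cell belongs to no degenerate triple. *)

theory Defs
  imports Main
begin

text \<open>Partitions are lists lam = [lam_1,...,lam_k], weakly decreasing, positive.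
  Columns are indexed 1..k, rows 1..lam_i (from the bottom).\<close>

definition is_partition :: "nat list \<Rightarrow> bool" where
  "is_partition lam \<longleftrightarrow> sorted_wrt (\<ge>) lam \<and> (\<forall>x\<in>set lam. 0 < x)"

definition part :: "nat list \<Rightarrow> nat \<Rightarrow> nat" where
  "part lam i = lam ! (i - 1)"

text \<open>Cells are pairs (r,i): row r from the bottom, column i from the left.\<close>
definition dg :: "nat list \<Rightarrow> (nat \<times> nat) set" where
  "dg lam = {(r, i). 1 \<le> i \<and> i \<le> length lam \<and> 1 \<le> r \<and> r \<le> part lam i}"

definition leg :: "nat list \<Rightarrow> nat \<times> nat \<Rightarrow> nat" where
  "leg lam u = part lam (snd u) - fst u"

text \<open>Letters are encoded as nonzero integers: the positive letter i is the
  integer i, the negative letter bar i is the integer -i; 0 plays the role of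
  the auxiliary symbol 0. The order <_2 : 0 < 1 < 2 < ... < bar 3 < bar 2 < bar 1.\<close>
definition lt2 :: "int \<Rightarrow> int \<Rightarrow> bool" where
  "lt2 a b \<longleftrightarrow> (0 \<le> a \<and> 0 \<le> b \<and> a < b) \<or> (0 \<le> a \<and> b < 0) \<or> (a < 0 \<and> b < 0 \<and> a < b)"

definition Ind :: "int \<Rightarrow> int \<Rightarrow> bool" where
  "Ind a b \<longleftrightarrow> lt2 b a \<or> (a = b \<and> a < 0)"

definition super_filling :: "nat list \<Rightarrow> (nat \<times> nat \<Rightarrow> int) \<Rightarrow> bool" where
  "super_filling lam \<sigma> \<longleftrightarrow> (\<forall>u\<in>dg lam. \<sigma> u \<noteq> 0)"

definition descent :: "nat list \<Rightarrow> (nat \<times> nat \<Rightarrow> int) \<Rightarrow> nat \<times> nat \<Rightarrow> bool" where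
  "descent lam \<sigma> u \<longleftrightarrow> u \<in> dg lam \<and> 1 < fst u \<and> Ind (\<sigma> u) (\<sigma> (fst u - 1, snd u))"

definition maj :: "nat list \<Rightarrow> (nat \<times> nat \<Rightarrow> int) \<Rightarrow> nat" where
  "maj lam \<sigma> = (\<Sum>u\<in>{u. descent lam \<sigma> u}. leg lam u + 1)"

text \<open>Triples, indexed by (r,i,j): cells (r+1,i),(r,i),(r,j) with i<j, or
  (degenerate) cells (r,i),(r,j) with i<j and lam_i = r.\<close>
definition triples :: "nat list \<Rightarrow> (nat \<times> nat \<times> nat) set" where
  "triples lam = {(r, i, j). (r, i) \<in> dg lam \<and> (r, j) \<in> dg lam \<and> i < j \<and>
                            ((r + 1, i) \<in> dg lam \<or> part lam i = r)}"

definition degenerate_triple :: "nat list \<Rightarrow> nat \<times> nat \<times> nat \<Rightarrow> bool" where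
  "degenerate_triple lam t \<longleftrightarrow> t \<in> triples lam \<and> part lam (fst (snd t)) = fst t"

definition triple_top :: "nat list \<Rightarrow> (nat \<times> nat \<Rightarrow> int) \<Rightarrow> nat \<Rightarrow> nat \<Rightarrow> int" where
  "triple_top lam \<sigma> r i = (if part lam i = r then 0 else \<sigma> (r + 1, i))"

definition quinv_triple :: "nat list \<Rightarrow> (nat \<times> nat \<Rightarrow> int) \<Rightarrow> nat \<times> nat \<times> nat \<Rightarrow> bool" where
  "quinv_triple lam \<sigma> t \<longleftrightarrow>
     (case t of (r, i, j) \<Rightarrow>
       (let a = triple_top lam \<sigma> r i; b = \<sigma> (r, i); c = \<sigma> (r, j) in
          of_bool (Ind a b) + of_bool (\<not> Ind c b) + of_bool (\<not> Ind a c) = (1::nat)))"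

definition quinv :: "nat list \<Rightarrow> (nat \<times> nat \<Rightarrow> int) \<Rightarrow> nat" where
  "quinv lam \<sigma> = card {t \<in> triples lam. quinv_triple lam \<sigma> t}"

definition pos_count :: "nat list \<Rightarrow> (nat \<times> nat \<Rightarrow> int) \<Rightarrow> nat" where
  "pos_count lam \<sigma> = card {u \<in> dg lam. 0 < \<sigma> u}"

definition reads_before :: "nat \<times> nat \<Rightarrow> nat \<times> nat \<Rightarrow> bool" where
  "reads_before u v \<longleftrightarrow> fst u > fst v \<or> (fst u = fst v \<and> snd u > snd v)"

definition has_dist_label :: "nat list \<Rightarrow> (nat \<times> nat \<Rightarrow> int) \<Rightarrow> bool" where
  "has_dist_label lam \<sigma> \<longleftrightarrow>
     (\<exists>a::nat. 0 < a \<and> (\<exists>(r, j)\<in>dg lam. \<bar>\<sigma> (r, j)\<bar> = int a \<and> r > a))"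

definition dist_label :: "nat list \<Rightarrow> (nat \<times> nat \<Rightarrow> int) \<Rightarrow> nat" where
  "dist_label lam \<sigma> =
     (LEAST a::nat. 0 < a \<and> (\<exists>(r, j)\<in>dg lam. \<bar>\<sigma> (r, j)\<bar> = int a \<and> r > a))"

definition dist_cell :: "nat list \<Rightarrow> (nat \<times> nat \<Rightarrow> int) \<Rightarrow> nat \<times> nat" where
  "dist_cell lam \<sigma> =
     (THE u. u \<in> dg lam \<and> \<bar>\<sigma> u\<bar> = int (dist_label lam \<sigma>) \<and>
             (\<forall>v\<in>dg lam. \<bar>\<sigma> v\<bar> = int (dist_label lam \<sigma>) \<longrightarrow> v \<noteq> u \<longrightarrow> reads_before u v))"

definition in_degenerate_triple :: "nat list \<Rightarrow> nat \<times> nat \<Rightarrow> bool" where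
  "in_degenerate_triple lam u \<longleftrightarrow>
     (\<exists>r i j. degenerate_triple lam (r, i, j) \<and> (u = (r, i) \<or> u = (r, j)))"

definition Phi_nondeg :: "nat list \<Rightarrow> (nat \<times> nat \<Rightarrow> int) \<Rightarrow> bool" where
  "Phi_nondeg lam \<sigma> \<longleftrightarrow> has_dist_label lam \<sigma> \<and> \<not> in_degenerate_triple lam (dist_cell lam \<sigma>)"

definition Phi :: "nat \<times> nat \<Rightarrow> (nat \<times> nat \<Rightarrow> int) \<Rightarrow> (nat \<times> nat \<Rightarrow> int)" where
  "Phi u \<sigma> = \<sigma>(u := - \<sigma> u)"

end

theory Submission imports Defs "HOL-Library.Product_Lexorder" begin
lemma L1: "(0::int) < a \<Longrightarrow> \<bar>s\<bar> = a \<Longrightarrow> a \<le> \<bar>c\<bar> \<Longrightarrow> Ind s c \<longleftrightarrow> s < 0"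
  unfolding Ind_def lt2_def by (auto simp: abs_if split: if_splits)
lemma L2: "(0::int) < a \<Longrightarrow> \<bar>s\<bar> = a \<Longrightarrow> a < \<bar>c\<bar> \<Longrightarrow> Ind c s \<longleftrightarrow> 0 < s"
  unfolding Ind_def lt2_def by (auto simp: abs_if split: if_splits)
definition Q where "Q a b c \<longleftrightarrow> of_bool (Ind a b) + of_bool (\<not> Ind c b) + of_bool (\<not> Ind a c) = (1::nat)"
lemma qt_Q: "quinv_triple lam \<sigma> (r,i,j) = Q (triple_top lam \<sigma> r i) (\<sigma> (r,i)) (\<sigma> (r,j))"
  unfolding quinv_triple_def Q_def Let_def by simp
lemma C2: "(0::int) < a \<Longrightarrow> \<bar>s\<bar> = a \<Longrightarrow> a < \<bar>A\<bar> \<Longrightarrow> a < \<bar>c\<bar> \<Longrightarrow> Q A (-s) c = Q A s c"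
  using L2[of a s A] L2[of a s c] L2[of a "-s" A] L2[of a "-s" c] unfolding Q_def by auto
lemma C3: "(0::int) < a \<Longrightarrow> \<bar>s\<bar> = a \<Longrightarrow> a < \<bar>A\<bar> \<Longrightarrow> a \<le> \<bar>b\<bar> \<Longrightarrow> Q A b (-s) = Q A b s"
  using L1[of a s b] L2[of a s A] L1[of a "-s" b] L2[of a "-s" A] unfolding Q_def by auto
lemma C1: "(0::int) < a \<Longrightarrow> \<bar>s\<bar> = a \<Longrightarrow> a \<le> \<bar>b\<bar> \<Longrightarrow> a \<le> \<bar>c\<bar> \<Longrightarrow> Q (-s) b c = Q s b c"
  using L1[of a s b] L1[of a s c] L1[of a "-s" b] L1[of a "-s" c] unfolding Q_def by auto
lemma fin_dg: "finite (dg lam)"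
proof -
  have "dg lam \<subseteq> {..sum_list lam} \<times> {..length lam}"
    by (auto simp: dg_def part_def intro!: order_trans[OF _ elem_le_sum_list])
  then show ?thesis by (rule finite_subset) auto
qed
lemma Phi_app: "Phi u \<sigma> v = (if v = u then - \<sigma> u else \<sigma> v)" by (simp add: Phi_def)
lemma Phi_abs[simp]: "\<bar>Phi u \<sigma> v\<bar> = \<bar>\<sigma> v\<bar>" by (simp add: Phi_def)
lemma Phi_Phi: "Phi u (Phi u \<sigma>) = \<sigma>" by (auto simp: Phi_def)

locale fconf =
  fixes lam \<sigma> u r j and a :: int
  assumes u: "u = (r,j)" "u \<in> dg lam" and a: "0 < a" "\<bar>\<sigma> u\<bar> = a" "a < int r"
  and big: "\<And>v. v \<in> dg lam \<Longrightarrow> a \<le> int (fst v) \<Longrightarrow> a \<le> \<bar>\<sigma> v\<bar>"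
  and first: "\<And>v. v \<in> dg lam \<Longrightarrow> \<bar>\<sigma> v\<bar> = a \<Longrightarrow> v \<noteq> u \<Longrightarrow> reads_before u v"
  and nd: "\<not> in_degenerate_triple lam u"
begin

lemma gt: "v \<in> dg lam \<Longrightarrow> fst v > r \<or> (fst v = r \<and> snd v > j) \<Longrightarrow> a < \<bar>\<sigma> v\<bar>"
proof -
  assume v: "v \<in> dg lam" and o: "fst v > r \<or> (fst v = r \<and> snd v > j)"
  have "a \<le> int (fst v)" using o a by auto
  then have "a \<le> \<bar>\<sigma> v\<bar>" using big v by auto
  moreover have "\<bar>\<sigma> v\<bar> \<noteq> a"
  proof
    assume "\<bar>\<sigma> v\<bar> = a"
    moreover have "v \<noteq> u" using o u by auto
    ultimately have "reads_before u v" using first v by auto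
    then show False using o u unfolding reads_before_def by auto
  qed
  ultimately show ?thesis by auto
qed

lemma quinv_eq: "quinv lam (Phi u \<sigma>) = quinv lam \<sigma>"
proof -
  have "{t \<in> triples lam. quinv_triple lam (Phi u \<sigma>) t} = {t \<in> triples lam. quinv_triple lam \<sigma> t}"
  proof (intro Collect_cong conj_cong refl)
    fix t assume t: "t \<in> triples lam"
    obtain r' i j' where tt: "t = (r',i,j')" by (cases t) 
    from t tt have c: "(r',i) \<in> dg lam" "(r',j') \<in> dg lam" "i < j'" "(r'+1,i) \<in> dg lam \<or> part lam i = r'"
      by (auto simp: triples_def)
    show "quinv_triple lam (Phi u \<sigma>) t = quinv_triple lam \<sigma> t"
    proof (cases "(r',i) = u")
      case True
      then have np: "part lam i \<noteq> r'" using nd t tt by (auto simp: in_degenerate_triple_def degenerate_triple_def)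
      with c have d: "(r'+1,i) \<in> dg lam" by auto
      have "a < \<bar>\<sigma> (r'+1,i)\<bar>" using gt[OF d] True u by auto
      moreover have "a < \<bar>\<sigma> (r',j')\<bar>" using gt[OF c(2)] True u c by auto
      ultimately show ?thesis using True np c u C2[OF a(1) a(2)] unfolding tt qt_Q triple_top_def Phi_app
        by auto
    next
      case F1: False
      show ?thesis
      proof (cases "(r',j') = u")
        case True
        then have np: "part lam i \<noteq> r'" using nd t tt by (auto simp: in_degenerate_triple_def degenerate_triple_def)
        with c have d: "(r'+1,i) \<in> dg lam" by auto
        have "a < \<bar>\<sigma> (r'+1,i)\<bar>" using gt[OF d] True u by auto
        moreover have "a \<le> \<bar>\<sigma> (r',i)\<bar>" using big[OF c(1)] True u a by auto
        ultimately show ?thesis using True F1 np c u C3[OF a(1) a(2)] unfolding tt qt_Q triple_top_def Phi_app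
          by auto
      next
        case F2: False
        show ?thesis
        proof (cases "(r'+1,i) = u")
          case True
          then have np: "part lam i \<noteq> r'" using u(2) by (auto simp: dg_def)
          have "a \<le> \<bar>\<sigma> (r',i)\<bar>" using big[OF c(1)] True u a by auto
          moreover have "a \<le> \<bar>\<sigma> (r',j')\<bar>" using big[OF c(2)] True u a by auto
          ultimately show ?thesis using True F1 F2 np c u C1[OF a(1) a(2)] unfolding tt qt_Q triple_top_def Phi_app
            by auto
        next
          case False
          then show ?thesis using F1 F2 unfolding tt qt_Q triple_top_def Phi_app by auto
        qed
      qed
    qed
  qed
  then show ?thesis unfolding quinv_def by simp
qed

definition g :: "(nat \<times> nat \<Rightarrow> int) \<Rightarrow> nat \<times> nat \<Rightarrow> nat" where
  "g \<tau> v = (if descent lam \<tau> v then leg lam v + 1 else 0)"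

lemma maj_g: "maj lam \<tau> = sum (g \<tau>) (dg lam)"
proof -
  have "{v. descent lam \<tau> v} = {v \<in> dg lam. descent lam \<tau> v}" by (auto simp: descent_def)
  then show ?thesis unfolding maj_def g_def
    using sum.inter_filter[OF fin_dg, of "\<lambda>v. leg lam v + 1" lam "descent lam \<tau>"] by simp
qed

lemma pm_pos:
  assumes s: "0 < \<sigma> u"
  shows "pos_count lam (Phi u \<sigma>) + maj lam (Phi u \<sigma>) = pos_count lam \<sigma> + maj lam \<sigma>"
proof -
  define w where "w = (r+1, j)"
  define R where "R = dg lam - {u} - {w}"
  have r2: "2 \<le> r" using a by auto
  have ud: "1 \<le> j" "j \<le> length lam" "r \<le> part lam j" using u by (auto simp: dg_def)
  have bd: "(r-1, j) \<in> dg lam" using ud r2 by (auto simp: dg_def)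
  have bb: "a \<le> \<bar>\<sigma> (r-1,j)\<bar>" using big[OF bd] a r2 by auto
  have wne: "w \<noteq> u" "(r-1,j) \<noteq> u" using u w_def r2 by auto
  have decomp: "\<And>\<tau>. sum (g \<tau>) (dg lam) = g \<tau> u + (if w \<in> dg lam then g \<tau> w else 0) + sum (g \<tau>) R"
  proof -
    fix \<tau>
    have "sum (g \<tau>) (dg lam) = g \<tau> u + sum (g \<tau>) (dg lam - {u})"
      using sum.remove[OF fin_dg u(2)] by simp
    moreover have "sum (g \<tau>) (dg lam - {u}) = (if w \<in> dg lam then g \<tau> w else 0) + sum (g \<tau>) R"
    proof (cases "w \<in> dg lam")
      case True
      then have "w \<in> dg lam - {u}" using wne by auto
      from sum.remove[OF _ this, of "g \<tau>"] fin_dg show ?thesis using True unfolding R_def by simp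
    next
      case False
      then have "dg lam - {u} = R" unfolding R_def by auto
      then show ?thesis using False by simp
    qed
    ultimately show "sum (g \<tau>) (dg lam) = g \<tau> u + (if w \<in> dg lam then g \<tau> w else 0) + sum (g \<tau>) R"
      by simp
  qed
  have restR: "sum (g (Phi u \<sigma>)) R = sum (g \<sigma>) R"
  proof (rule sum.cong[OF refl])
    fix v assume v: "v \<in> R"
    have "(fst v - 1, snd v) \<noteq> u"
    proof
      assume "(fst v - 1, snd v) = u"
      then have "fst v = r + 1" "snd v = j" using u r2 by auto
      then show False using v unfolding R_def w_def by (cases v) auto
    qed
    moreover have "v \<noteq> u" using v R_def by auto
    ultimately show "g (Phi u \<sigma>) v = g \<sigma> v" unfolding g_def descent_def Phi_app by simp
  qed
  have gu: "g \<sigma> u = 0" "g (Phi u \<sigma>) u = part lam j - r + 1"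
    using L1[OF a(1) a(2) bb] L1[of a "- \<sigma> u" "\<sigma> (r-1,j)"] a bb s u r2 wne
    unfolding g_def descent_def Phi_app leg_def by auto
  have gw: "w \<in> dg lam \<Longrightarrow> g \<sigma> w = part lam j - (r+1) + 1 \<and> g (Phi u \<sigma>) w = 0"
  proof -
    assume wd: "w \<in> dg lam"
    have "a < \<bar>\<sigma> w\<bar>" using gt[OF wd] w_def by auto
    then show ?thesis
      using L2[OF a(1) a(2), of "\<sigma> w"] L2[of a "- \<sigma> u" "\<sigma> w"] a s u wne wd
      unfolding g_def descent_def Phi_app leg_def w_def by auto
  qed
  have wd2: "w \<in> dg lam \<Longrightarrow> r + 1 \<le> part lam j" unfolding w_def dg_def by auto
  have wnd: "w \<notin> dg lam \<Longrightarrow> part lam j = r" using ud unfolding w_def dg_def by auto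
  have pos: "pos_count lam \<sigma> = pos_count lam (Phi u \<sigma>) + 1"
  proof -
    have "{v \<in> dg lam. 0 < \<sigma> v} = insert u {v \<in> dg lam. 0 < Phi u \<sigma> v}"
      using s u(2) by (auto simp: Phi_app)
    moreover have "u \<notin> {v \<in> dg lam. 0 < Phi u \<sigma> v}" using s by (auto simp: Phi_app)
    moreover have "finite {v \<in> dg lam. 0 < Phi u \<sigma> v}" using fin_dg by auto
    ultimately show ?thesis unfolding pos_count_def by simp
  qed
  show ?thesis unfolding maj_g decomp restR pos using gu gw wnd wd2 ud by (cases "w \<in> dg lam") auto
qed
end

theorem mainTheorem11:
  fixes lam :: "nat list" and \<sigma> :: "nat \<times> nat \<Rightarrow> int" and u :: "nat \<times> nat"
  assumes "is_partition lam"
    and "super_filling lam \<sigma>"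
    and "Phi_nondeg lam \<sigma>"
    and "u = dist_cell lam \<sigma>"
  shows "Phi_nondeg lam (Phi u \<sigma>) \<and> dist_cell lam (Phi u \<sigma>) = u \<and>
         pos_count lam (Phi u \<sigma>) + maj lam (Phi u \<sigma>) = pos_count lam \<sigma> + maj lam \<sigma> \<and>
         quinv lam (Phi u \<sigma>) = quinv lam \<sigma>"
proof -
  define P where "P = (\<lambda>a::nat. 0 < a \<and> (\<exists>(r, j)\<in>dg lam. \<bar>\<sigma> (r, j)\<bar> = int a \<and> r > a))"
  define a where "a = dist_label lam \<sigma>"
  have aL: "a = (LEAST a. P a)" unfolding a_def dist_label_def P_def by simp
  have "\<exists>b. P b" using assms(3) unfolding Phi_nondeg_def has_dist_label_def P_def by auto
  then have Pa: "P a" unfolding aL by (rule LeastI_ex)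
  then obtain r0 j0 where w0: "(r0,j0) \<in> dg lam" "\<bar>\<sigma> (r0,j0)\<bar> = int a" "r0 > a" "0 < a"
    unfolding P_def by auto
  have big: "\<And>v. v \<in> dg lam \<Longrightarrow> int a \<le> int (fst v) \<Longrightarrow> int a \<le> \<bar>\<sigma> v\<bar>"
  proof (rule ccontr)
    fix v assume v: "v \<in> dg lam" "int a \<le> int (fst v)" "\<not> int a \<le> \<bar>\<sigma> v\<bar>"
    have "\<sigma> v \<noteq> 0" using assms(2) v(1) unfolding super_filling_def by auto
    then have "P (nat \<bar>\<sigma> v\<bar>)" unfolding P_def using v by (cases v) force
    then have "a \<le> nat \<bar>\<sigma> v\<bar>" unfolding aL by (rule Least_le)
    then show False using v by auto
  qed
  define S where "S = {v \<in> dg lam. \<bar>\<sigma> v\<bar> = int a}"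
  have finS: "finite S" unfolding S_def using fin_dg by auto
  have w0S: "(r0,j0) \<in> S" using w0 S_def by auto
  define m where "m = Max S"
  have mS: "m \<in> S" unfolding m_def using finS w0S by (intro Max_in) auto
  have mge: "\<And>v. v \<in> S \<Longrightarrow> v \<le> m" unfolding m_def using finS by auto
  have rb: "\<And>v. v \<in> S \<Longrightarrow> v \<noteq> m \<Longrightarrow> reads_before m v"
  proof -
    fix v assume "v \<in> S" "v \<noteq> m"
    then have "v < m" using mge by (simp add: order_le_neq_trans)
    then show "reads_before m v" unfolding reads_before_def by (cases v, cases m) (auto simp: less_prod_def)
  qed
  have dc: "dist_cell lam \<sigma> = m"
    unfolding dist_cell_def a_def[symmetric]
  proof (rule the_equality)
    show "m \<in> dg lam \<and> \<bar>\<sigma> m\<bar> = int a \<and> (\<forall>v\<in>dg lam. \<bar>\<sigma> v\<bar> = int a \<longrightarrow> v \<noteq> m \<longrightarrow> reads_before m v)"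
      using mS rb unfolding S_def by auto
  next
    fix x assume x: "x \<in> dg lam \<and> \<bar>\<sigma> x\<bar> = int a \<and> (\<forall>v\<in>dg lam. \<bar>\<sigma> v\<bar> = int a \<longrightarrow> v \<noteq> x \<longrightarrow> reads_before x v)"
    show "x = m"
    proof (rule ccontr)
      assume "x \<noteq> m"
      then have "reads_before x m" "reads_before m x" using x mS rb[of x] unfolding S_def by auto
      then show False unfolding reads_before_def by auto
    qed
  qed
  have um: "u = m" using assms(4) dc by simp
  have fr: "fst u > a" using mge[OF w0S] w0(3) um by (cases m) (auto simp: less_eq_prod_def)
  have nd: "\<not> in_degenerate_triple lam u" using assms(3,4) unfolding Phi_nondeg_def by simp
  interpret F: fconf lam \<sigma> u "fst u" "snd u" "int a"
    apply unfold_locales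
    using mS um S_def w0 fr big rb nd by auto
  have abs_eq: "dist_label lam (Phi u \<sigma>) = dist_label lam \<sigma>" "dist_cell lam (Phi u \<sigma>) = dist_cell lam \<sigma>"
     "has_dist_label lam (Phi u \<sigma>) = has_dist_label lam \<sigma>"
    unfolding dist_label_def dist_cell_def has_dist_label_def by simp_all
  have pm: "pos_count lam (Phi u \<sigma>) + maj lam (Phi u \<sigma>) = pos_count lam \<sigma> + maj lam \<sigma>"
  proof (cases "0 < \<sigma> u")
    case True
    then show ?thesis by (rule F.pm_pos)
  next
    case False
    interpret G: fconf lam "Phi u \<sigma>" u "fst u" "snd u" "int a"
      apply unfold_locales
      using mS um S_def w0 fr big rb nd by auto
    have "0 < Phi u \<sigma> u" using False F.a by (simp add: Phi_app)
    from G.pm_pos[OF this] show ?thesis unfolding Phi_Phi by simp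
  qed
  show ?thesis using abs_eq assms(3,4) pm F.quinv_eq unfolding Phi_nondeg_def by simp
qed
end
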